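(* Let $(X_1,Y_1)^\top,\dots,(X_n,Y_n)^\top$ be i.i.d. with the same distribution as the random element $(X,Y)^\top$ of $\mathcal{H}\times\mathcal{H}$. Let $\eta_n=\sup_{\|u\|=\|v\|=1}|g_n(u,v)-\gamma_{XY}(u,v)|$, $\zeta_n=\sup_{\|u\|=1}|s_{n,X}^2(u)-\sigma_X^2(u)|$ and $\nu_n=\sup_{\|v\|=1}|s_{n,Y}^2(v)-\sigma_Y^2(v)|$. Assume: (C1) there exist $c>0$ and a self-adjoint, positive, compact operator $\Gamma=\begin{pmatrix}\Gamma_{11}&\Gamma_{12}\\ \Gamma_{21}&\Gamma_{22}\end{pmatrix}$ on $\mathcal{H}\times\mathcal{H}$ such that for all $u,v\in\mathcal{H}$, $\sigma_X^2(u)=c\langle u,\Gamma_{11}u\rangle$, $\sigma_Y^2(v)=c\langle v,\Gamma_{22}v\rangle$, $\gamma_{XY}(u,v)=c\langle u,\Gamma_{12}v\rangle$, and the eigenfunctions of $\Gamma_{11}$ and $\Gamma_{22}$ lie in $\mathcal{H}_{\mathrm{smooth}}$; (C3) (a) for every $u\in\mathcal{N}$, $u\neq0$, $\sigma_X(u)\ne0$ and $\sigma_Y(u)\neq0$; (b) $\mathcal{N}$ is finite dimensional and there exists $d>0$ such that $\Psi(u)>d\|u\|^2$ for all $u\in\mathcal{N}^\perp$. If $\tau_n\to0$ and $\tau_n^{-1}\max(\zeta_n,\nu_n,\eta_n)\to0$ almost surely as $n\to\infty$, then $C_{n,X}\to0$, $C_{n,Y}\to0$ and $C_{n,XY}\to0$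 almost surely.
   Context: $\mathcal{H}$ is a separable real Hilbert space with inner product $\langle\cdot,\cdot\rangle$ and norm $\|\cdot\|$. A bivariate co-association functional $\gamma_{\mathrm{R}}$ assigns a real number to each bivariate distribution with $\gamma_{\mathrm{R}}(U,V)=\gamma_{\mathrm{R}}(V,U)$ and $\gamma_{\mathrm{R}}(aU+b,cV+d)=ac\,\gamma_{\mathrm{R}}(U,V)$; a scale functional $\sigma_{\mathrm{R}}\ge0$ satisfies $\sigma_{\mathrm{R}}(aU+b)=|a|\sigma_{\mathrm{R}}(U)$; it is assumed $\gamma_{\mathrm{R}}^2(U,V)\le\sigma_{\mathrm{R}}^2(U)\sigma_{\mathrm{R}}^2(V)$. For $u,v\in\mathcal{H}$: $\sigma_X(u)$, $\sigma_Y(v)$, $\gamma_{XY}(u,v)$ are $\sigma_{\mathrm{R}}$ of the law of $\langle u,X\rangle$, $\sigma_{\mathrm{R}}$ of the law of $\langle v,Y\rangle$, and $\gamma_{\mathrm{R}}$ of the law of $(\langle u,X\rangle,\langle v,Y\rangle)$; $s_{n,X}(u)$, $s_{n,Y}(v)$, $g_n(u,v)$ are the same functionals applied to the empirical distributions of $\langle u,X_i\rangle$, $\langle v,Y_i\rangle$, and $(\langle u,X_i\rangle,\langle v,Y_i\rangle)$, $1\le i\le n$. $\mathcal{H}_{\mathrm{smooth}}\subset\mathcal{H}$ is the set of smooth elements, $D:\mathcal{H}_{\mathrm{smooth}}\to\mathcal{H}$ is linear, $\lceil u,v\rceil=\langle Du,Dv\rangle$, $\Psi(u)=\lceil u,u\rceil$,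 $\mathcal{N}$ is the null space of $\lceil\cdot,\cdot\rceil$ and $\mathcal{N}^\perp$ its orthogonal complement. For $u,v\in\mathcal{H}_{\mathrm{smooth}}$, $\|u\|_{1,\tau}^2=\sigma_X^2(u)+\tau\Psi(u)$, $\|v\|_{2,\tau}^2=\sigma_Y^2(v)+\tau\Psi(v)$; $C_{n,X}=\sup_{\|u\|_{1,\tau_n}=1}|s_{n,X}^2(u)-\sigma_X^2(u)|$, $C_{n,Y}=\sup_{\|v\|_{2,\tau_n}=1}|s_{n,Y}^2(v)-\sigma_Y^2(v)|$, $C_{n,XY}=\sup_{\|u\|_{1,\tau_n}=\|v\|_{2,\tau_n}=1}|g_n(u,v)-\gamma_{XY}(u,v)|$. *)

theory Defs
  imports "HOL-Probability.Probability"
begin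

definition separable_space :: "'a::topological_space itself \<Rightarrow> bool" where
  "separable_space _ \<longleftrightarrow> (\<exists>S::'a set. countable S \<and> closure S = UNIV)"

definition emp_dist :: "nat \<Rightarrow> (nat \<Rightarrow> 'b::topological_space) \<Rightarrow> 'b measure" where
  "emp_dist n z = distr (uniform_count_measure {..<n}) borel z"

definition is_dist :: "'b::topological_space measure \<Rightarrow> bool" where
  "is_dist P \<longleftrightarrow> prob_space P \<and> sets P = sets borel"

definition coassoc_functional :: "((real \<times> real) measure \<Rightarrow> real) \<Rightarrow> bool" where
  "coassoc_functional \<gamma>R \<longleftrightarrow>
     (\<forall>P. is_dist P \<longrightarrow>
        \<gamma>R (distr P borel (\<lambda>(x,y). (y,x))) = \<gamma>R P \<and>
        (\<forall>a b c d. \<gamma>R (distr P borel (\<lambda>(x,y). (a*x+b, c*y+d))) = a * c * \<gamma>R P))"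

definition scale_functional :: "(real measure \<Rightarrow> real) \<Rightarrow> bool" where
  "scale_functional \<sigma>R \<longleftrightarrow>
     (\<forall>P. is_dist P \<longrightarrow> \<sigma>R P \<ge> 0 \<and>
        (\<forall>a b. \<sigma>R (distr P borel (\<lambda>x. a*x+b)) = \<bar>a\<bar> * \<sigma>R P))"

definition cs_bound :: "((real \<times> real) measure \<Rightarrow> real) \<Rightarrow> (real measure \<Rightarrow> real) \<Rightarrow> bool" where
  "cs_bound \<gamma>R \<sigma>R \<longleftrightarrow>
     (\<forall>P. is_dist P \<longrightarrow>
        (\<gamma>R P)\<^sup>2 \<le> (\<sigma>R (distr P borel fst))\<^sup>2 * (\<sigma>R (distr P borel snd))\<^sup>2)"

definition pop_sig :: "(real measure \<Rightarrow> real) \<Rightarrow> 'w measure \<Rightarrow> ('w \<Rightarrow> 'h::real_inner) \<Rightarrow> 'h \<Rightarrow> real" where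
  "pop_sig \<sigma>R M X u = \<sigma>R (distr M borel (\<lambda>\<omega>. inner u (X \<omega>)))"

definition pop_gam :: "((real \<times> real) measure \<Rightarrow> real) \<Rightarrow> 'w measure \<Rightarrow> ('w \<Rightarrow> 'h::real_inner)
    \<Rightarrow> ('w \<Rightarrow> 'h) \<Rightarrow> 'h \<Rightarrow> 'h \<Rightarrow> real" where
  "pop_gam \<gamma>R M X Y u v = \<gamma>R (distr M borel (\<lambda>\<omega>. (inner u (X \<omega>), inner v (Y \<omega>))))"

definition emp_sig :: "(real measure \<Rightarrow> real) \<Rightarrow> (nat \<Rightarrow> 'w \<Rightarrow> 'h::real_inner) \<Rightarrow> nat \<Rightarrow> 'w \<Rightarrow> 'h \<Rightarrow> real" where
  "emp_sig \<sigma>R X n \<omega> u = \<sigma>R (emp_dist n (\<lambda>i. inner u (X i \<omega>)))"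

definition emp_gam :: "((real \<times> real) measure \<Rightarrow> real) \<Rightarrow> (nat \<Rightarrow> 'w \<Rightarrow> 'h::real_inner)
    \<Rightarrow> (nat \<Rightarrow> 'w \<Rightarrow> 'h) \<Rightarrow> nat \<Rightarrow> 'w \<Rightarrow> 'h \<Rightarrow> 'h \<Rightarrow> real" where
  "emp_gam \<gamma>R X Y n \<omega> u v = \<gamma>R (emp_dist n (\<lambda>i. (inner u (X i \<omega>), inner v (Y i \<omega>))))"

definition self_adjoint :: "('a::real_inner \<Rightarrow> 'a) \<Rightarrow> bool" where
  "self_adjoint T \<longleftrightarrow> (\<forall>x y. inner (T x) y = inner x (T y))"

definition positive_op :: "('a::real_inner \<Rightarrow> 'a) \<Rightarrow> bool" where
  "positive_op T \<longleftrightarrow> (\<forall>x. inner x (T x) \<ge> 0)"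

definition compact_op :: "('a::real_normed_vector \<Rightarrow> 'b::real_normed_vector) \<Rightarrow> bool" where
  "compact_op T \<longleftrightarrow> bounded_linear T \<and> compact (closure (T ` cball 0 1))"

definition blk11 :: "('h::real_vector \<times> 'h \<Rightarrow> 'h \<times> 'h) \<Rightarrow> 'h \<Rightarrow> 'h" where
  "blk11 G u = fst (G (u, 0))"
definition blk12 :: "('h::real_vector \<times> 'h \<Rightarrow> 'h \<times> 'h) \<Rightarrow> 'h \<Rightarrow> 'h" where
  "blk12 G v = fst (G (0, v))"
definition blk21 :: "('h::real_vector \<times> 'h \<Rightarrow> 'h \<times> 'h) \<Rightarrow> 'h \<Rightarrow> 'h" where
  "blk21 G u = snd (G (u, 0))"
definition blk22 :: "('h::real_vector \<times> 'h \<Rightarrow> 'h \<times> 'h) \<Rightarrow> 'h \<Rightarrow> 'h" where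
  "blk22 G v = snd (G (0, v))"

definition eigenfunction :: "('h::real_vector \<Rightarrow> 'h) \<Rightarrow> 'h \<Rightarrow> bool" where
  "eigenfunction T u \<longleftrightarrow> u \<noteq> 0 \<and> (\<exists>l::real. T u = l *\<^sub>R u)"

definition rough :: "('h::real_inner \<Rightarrow> 'h) \<Rightarrow> 'h \<Rightarrow> 'h \<Rightarrow> real" where
  "rough D u v = inner (D u) (D v)"
definition Psi :: "('h::real_inner \<Rightarrow> 'h) \<Rightarrow> 'h \<Rightarrow> real" where
  "Psi D u = rough D u u"
definition nullsp :: "'h set \<Rightarrow> ('h::real_inner \<Rightarrow> 'h) \<Rightarrow> 'h set" where
  "nullsp Hs D = {u \<in> Hs. \<forall>v\<in>Hs. rough D u v = 0}"
definition orth_compl :: "'h::real_inner set \<Rightarrow> 'h set" where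
  "orth_compl S = {w. \<forall>u\<in>S. inner w u = 0}"

definition linear_on :: "'h::real_vector set \<Rightarrow> ('h \<Rightarrow> 'h) \<Rightarrow> bool" where
  "linear_on S D \<longleftrightarrow> (\<forall>x\<in>S. \<forall>y\<in>S. \<forall>a b::real. D (a *\<^sub>R x + b *\<^sub>R y) = a *\<^sub>R D x + b *\<^sub>R D y)"

end

theory Submission
  imports Defs
begin

lemma emp_dist_isdist:
  fixes z :: "nat \<Rightarrow> 'b::topological_space"
  assumes "n > 0" shows "is_dist (emp_dist n z)"
proof -
  have m: "z \<in> measurable (uniform_count_measure {..<n}) borel"
    by (simp add: measurable_def sets_uniform_count_measure space_uniform_count_measure Pi_iff)
  have "prob_space (uniform_count_measure {..<n})"
    using assms by (intro prob_space_uniform_count_measure) auto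
  then show ?thesis unfolding is_dist_def emp_dist_def
    using m by (auto intro: prob_space.prob_space_distr)
qed

lemma emp_dist_map:
  fixes z :: "nat \<Rightarrow> 'b::topological_space" and f :: "'b \<Rightarrow> 'c::topological_space"
  assumes "f \<in> borel_measurable borel"
  shows "emp_dist n (\<lambda>i. f (z i)) = distr (emp_dist n z) borel f"
proof -
  have m: "z \<in> measurable (uniform_count_measure {..<n}) borel"
    by (simp add: measurable_def sets_uniform_count_measure space_uniform_count_measure Pi_iff)
  show ?thesis unfolding emp_dist_def
    by (subst distr_distr[OF assms m]) (simp add: comp_def)
qed

lemma emp_sig_scale:
  assumes "scale_functional \<sigma>R" "n > 0"
  shows "emp_sig \<sigma>R X n \<omega> (a *\<^sub>R u) = \<bar>a\<bar> * emp_sig \<sigma>R X n \<omega> u"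
proof -
  have "emp_dist n (\<lambda>i. inner (a *\<^sub>R u) (X i \<omega>)) = emp_dist n (\<lambda>i. (\<lambda>x. a * x + 0) (inner u (X i \<omega>)))"
    by simp
  also have "\<dots> = distr (emp_dist n (\<lambda>i. inner u (X i \<omega>))) borel (\<lambda>x. a * x + 0)"
    by (rule emp_dist_map) simp
  moreover have "\<sigma>R (distr (emp_dist n (\<lambda>i. inner u (X i \<omega>))) borel (\<lambda>x. a * x + 0))
      = \<bar>a\<bar> * \<sigma>R (emp_dist n (\<lambda>i. inner u (X i \<omega>)))"
    using assms emp_dist_isdist[OF assms(2)] unfolding scale_functional_def by blast
  ultimately show ?thesis unfolding emp_sig_def by simp
qed

lemma emp_gam_scale:
  assumes "coassoc_functional \<gamma>R" "n > 0"
  shows "emp_gam \<gamma>R X Y n \<omega> (a *\<^sub>R u) (b *\<^sub>R v) = a * b * emp_gam \<gamma>R X Y n \<omega> u v"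
proof -
  have "emp_dist n (\<lambda>i. (inner (a *\<^sub>R u) (X i \<omega>), inner (b *\<^sub>R v) (Y i \<omega>))) =
     emp_dist n (\<lambda>i. (\<lambda>(x,y). (a * x + 0, b * y + 0)) (inner u (X i \<omega>), inner v (Y i \<omega>)))"
    by simp
  also have "\<dots> = distr (emp_dist n (\<lambda>i. (inner u (X i \<omega>), inner v (Y i \<omega>)))) borel (\<lambda>(x,y). (a * x + 0, b * y + 0))"
    by (rule emp_dist_map) (auto simp: case_prod_beta intro!: borel_measurable_continuous_onI continuous_intros)
  moreover have "\<gamma>R (distr (emp_dist n (\<lambda>i. (inner u (X i \<omega>), inner v (Y i \<omega>)))) borel (\<lambda>(x,y). (a * x + 0, b * y + 0)))
     = a * b * \<gamma>R (emp_dist n (\<lambda>i. (inner u (X i \<omega>), inner v (Y i \<omega>))))"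
    using assms emp_dist_isdist[OF assms(2)] unfolding coassoc_functional_def by blast
  ultimately show ?thesis unfolding emp_gam_def by simp
qed

lemma proj_exists:
  fixes B :: "'a::real_inner set"
  assumes "finite B"
  shows "\<exists>y\<in>span B. \<forall>w\<in>span B. inner (x - y) w = 0"
  using assms
proof (induction B arbitrary: x rule: finite_induct)
  case empty
  then show ?case by (auto simp: span_empty)
next
  case (insert b B)
  obtain yb where yb: "yb \<in> span B" "\<forall>w\<in>span B. inner (b - yb) w = 0"
    using insert.IH by blast
  obtain y where y: "y \<in> span B" "\<forall>w\<in>span B. inner (x - y) w = 0"
    using insert.IH by blast
  define b' where "b' = b - yb"
  show ?case
  proof (cases "b' = 0")
    case True
    then have "b \<in> span B" using yb b'_def by simp
    then have "span (insert b B) = span B" by (simp add: span_redundant)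
    then show ?thesis using y by auto
  next
    case False
    define y' where "y' = y + (inner (x - y) b' / inner b' b') *\<^sub>R b'"
    have b'sp: "b' \<in> span (insert b B)"
      unfolding b'_def
      by (meson insert_iff span_base span_diff span_mono subset_insertI subsetD yb(1))
    have y'sp: "y' \<in> span (insert b B)"
      unfolding y'_def
      by (meson b'sp span_add span_mono span_scale subset_insertI subsetD y(1))
    have o1: "inner (x - y') s = 0" if "s \<in> span B" for s
    proof -
      have "inner b' s = 0" using yb that b'_def by simp
      then show ?thesis using y that unfolding y'_def
        by (simp add: inner_diff_left inner_add_left)
    qed
    have bb: "inner b' b' \<noteq> 0" using False by simp
    have o2: "inner (x - y') b' = 0"
      unfolding y'_def using bb by (simp add: inner_diff_left inner_add_left)
    have o3: "inner (x - y') b = 0"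
    proof -
      have "b = b' + yb" by (simp add: b'_def)
      then have "inner (x - y') b = inner (x - y') b' + inner (x - y') yb"
        by (metis inner_add_right)
      then show ?thesis using o1 o2 yb(1) by simp
    qed
    have "\<forall>w\<in>span (insert b B). inner (x - y') w = 0"
    proof
      fix w assume "w \<in> span (insert b B)"
      then obtain k where k: "w - k *\<^sub>R b \<in> span B" by (auto simp: span_insert)
      have "w = (w - k *\<^sub>R b) + k *\<^sub>R b" by simp
      then have "inner (x - y') w = inner (x - y') (w - k *\<^sub>R b) + k * inner (x - y') b"
        by (metis inner_add_right inner_scaleR_right)
      then show "inner (x - y') w = 0" using o1[OF k] o3 by simp
    qed
    then show ?thesis using y'sp by blast
  qed
qed

lemma compact_span_ball:
  fixes B :: "'a::real_inner set"
  assumes "finite B"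
  shows "compact {w\<in>span B. norm w \<le> R}"
  using assms
proof (induction B arbitrary: R rule: finite_induct)
  case empty
  have "{w\<in>span ({}::'a set). norm w \<le> R} \<subseteq> {0}" by (auto simp: span_empty)
  then have "finite {w\<in>span ({}::'a set). norm w \<le> R}" using finite_subset by blast
  then show ?case by (rule finite_imp_compact)
next
  case (insert b B)
  obtain yb where yb: "yb \<in> span B" "\<forall>w\<in>span B. inner (b - yb) w = 0"
    using proj_exists[OF insert.hyps(1)] by blast
  define b' where "b' = b - yb"
  show ?case
  proof (cases "b' = 0")
    case True
    then have "b \<in> span B" using yb b'_def by simp
    then have "span (insert b B) = span B" by (simp add: span_redundant)
    then show ?thesis using insert.IH by simp
  next
    case False
    have nb: "norm b' > 0" using False by simp
    define f where "f = (\<lambda>p::'a \<times> real. fst p + snd p *\<^sub>R b')"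
    define Dm where "Dm = ({w\<in>span B. norm w \<le> R} \<times> {-R / norm b'..R / norm b'}) \<inter> {p. norm (f p) \<le> R}"
    have cf: "continuous_on UNIV f" unfolding f_def by (intro continuous_intros)
    have "compact Dm" unfolding Dm_def
      apply (rule compact_Int_closed)
       apply (rule compact_Times[OF insert.IH]) apply simp
      apply (rule closed_Collect_le)
      using cf by (auto intro: continuous_intros continuous_on_subset)
    then have cimg: "compact (f ` Dm)"
      by (metis compact_continuous_image continuous_on_subset cf subset_UNIV)
    have b'sp: "b' \<in> span (insert b B)"
      unfolding b'_def
      by (meson insert_iff span_base span_diff span_mono subset_insertI subsetD yb(1))
    have "{w\<in>span (insert b B). norm w \<le> R} = f ` Dm"
    proof (intro equalityI subsetI)
      fix w assume w: "w \<in> {w\<in>span (insert b B). norm w \<le> R}"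
      then obtain k where k: "w - k *\<^sub>R b \<in> span B" by (auto simp: span_insert)
      define s where "s = w - k *\<^sub>R b + k *\<^sub>R yb"
      have ssp: "s \<in> span B" unfolding s_def using k yb(1) by (simp add: span_add span_scale)
      have ws: "w = s + k *\<^sub>R b'" unfolding s_def b'_def by (simp add: algebra_simps)
      have "inner (k *\<^sub>R b') s = 0" using yb(2) ssp b'_def by simp
      then have "orthogonal s (k *\<^sub>R b')" by (simp add: orthogonal_def inner_commute)
      then have eq: "(norm w)\<^sup>2 = (norm s)\<^sup>2 + (norm (k *\<^sub>R b'))\<^sup>2"
        using ws norm_add_Pythagorean by metis
      have nw: "(norm w)\<^sup>2 \<le> R\<^sup>2" using w by (simp add: power_mono)
      have R0: "R \<ge> 0" using w norm_ge_zero order.trans by blast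
      have "(norm s)\<^sup>2 \<le> R\<^sup>2" using eq nw zero_le_power2[of "norm (k *\<^sub>R b')"] by linarith
      then have ns: "norm s \<le> R" using R0 by (simp add: power2_le_iff_abs_le)
      have "(norm (k *\<^sub>R b'))\<^sup>2 \<le> R\<^sup>2" using eq nw zero_le_power2[of "norm s"] by linarith
      then have "(\<bar>k\<bar> * norm b')\<^sup>2 \<le> R\<^sup>2" by simp
      then have "\<bar>k\<bar> * norm b' \<le> R" using R0 by (simp add: power2_le_iff_abs_le)
      then have "\<bar>k\<bar> \<le> R / norm b'" using nb by (simp add: field_simps)
      then have kI: "k \<in> {-R / norm b'..R / norm b'}" by auto
      have "(s, k) \<in> Dm" unfolding Dm_def f_def using ssp ns kI w ws by auto
      moreover have "w = f (s, k)" unfolding f_def using ws by simp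
      ultimately show "w \<in> f ` Dm" by blast
    next
      fix w assume "w \<in> f ` Dm"
      then obtain s k where sk: "(s, k) \<in> Dm" "w = f (s, k)" by auto
      then have "s \<in> span B" "norm w \<le> R" unfolding Dm_def by auto
      moreover have "s \<in> span (insert b B)"
        using \<open>s \<in> span B\<close> by (meson span_mono subset_insertI subsetD)
      ultimately show "w \<in> {w\<in>span (insert b B). norm w \<le> R}"
        using sk b'sp unfolding f_def by (auto intro: span_add span_scale)
    qed
    then show ?thesis using cimg by simp
  qed
qed

lemma qform_scale:
  assumes "bounded_linear A"
  shows "inner (a *\<^sub>R e) (A (a *\<^sub>R e)) = a\<^sup>2 * inner e (A e)"
proof -
  interpret A: bounded_linear A by fact
  show ?thesis by (simp add: A.scale power2_eq_square)
qed

lemma kappa_exists: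
  fixes A :: "'a::real_inner \<Rightarrow> 'a"
  assumes "finite B" "bounded_linear A" "\<forall>w\<in>span B. w \<noteq> 0 \<longrightarrow> inner w (A w) > 0"
  shows "\<exists>\<kappa>>0. \<forall>w\<in>span B. \<kappa> * (norm w)\<^sup>2 \<le> inner w (A w)"
proof -
  interpret A: bounded_linear A by fact
  define Sp where "Sp = {w\<in>span B. norm w \<le> 1} \<inter> {w. norm w = 1}"
  have cSp: "compact Sp" unfolding Sp_def
    by (intro compact_Int_closed compact_span_ball assms(1)) (auto intro: closed_Collect_eq continuous_intros)
  have cont: "continuous_on Sp (\<lambda>w. inner w (A w))"
    by (intro continuous_intros A.continuous_on continuous_on_id)
  show ?thesis
  proof (cases "Sp = {}")
    case True
    have "w = 0" if "w \<in> span B" for w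
    proof (rule ccontr)
      assume "w \<noteq> 0"
      then have "(1 / norm w) *\<^sub>R w \<in> Sp" unfolding Sp_def using that
        by (auto intro: span_scale)
      then show False using True by simp
    qed
    then have "\<forall>w\<in>span B. 1 * (norm w)\<^sup>2 \<le> inner w (A w)" by (metis A.zero inner_zero_left norm_zero order_refl power_zero_numeral mult_zero_right)
    then show ?thesis by (intro exI[of _ 1]) auto
  next
    case False
    obtain e where e: "e \<in> Sp" "\<forall>y\<in>Sp. inner e (A e) \<le> inner y (A y)"
      using continuous_attains_inf[OF cSp False cont] by blast
    have kpos: "inner e (A e) > 0" using e(1) assms(3) unfolding Sp_def by auto
    have "inner e (A e) * (norm w)\<^sup>2 \<le> inner w (A w)" if w: "w \<in> span B" for w
    proof (cases "w = 0")
      case True then show ?thesis by (simp add: A.zero)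
    next
      case False
      define v where "v = (1 / norm w) *\<^sub>R w"
      have "v \<in> Sp" unfolding Sp_def v_def using False w by (auto intro: span_scale)
      then have le: "inner e (A e) \<le> inner v (A v)" using e by blast
      have wv: "w = norm w *\<^sub>R v" unfolding v_def using False by simp
      have "inner w (A w) = (norm w)\<^sup>2 * inner v (A v)"
        by (subst wv, subst wv) (rule qform_scale[OF assms(2)])
      moreover have "inner e (A e) * (norm w)\<^sup>2 \<le> inner v (A v) * (norm w)\<^sup>2"
        using le by (rule mult_right_mono) simp
      ultimately show ?thesis by (simp add: mult.commute)
    qed
    then show ?thesis using kpos by blast
  qed
qed

lemma norm_bound:
  fixes A D :: "'a::real_inner \<Rightarrow> 'a"
  assumes bl: "bounded_linear A" and qpos: "\<forall>w. 0 \<le> inner w (A w)" and c: "c > 0"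
    and Hs: "subspace Hs" "linear_on Hs D"
    and B: "finite B" "nullsp Hs D = span B"
    and def: "\<forall>w\<in>span B. w \<noteq> 0 \<longrightarrow> inner w (A w) \<noteq> 0"
    and d: "d > 0" "\<forall>u\<in>orth_compl (nullsp Hs D) \<inter> Hs. u \<noteq> 0 \<longrightarrow> Psi D u > d * (norm u)\<^sup>2"
  shows "\<exists>C>0. \<forall>t u. 0 < t \<longrightarrow> t \<le> 1 \<longrightarrow> u \<in> Hs \<longrightarrow> c * inner u (A u) + t * Psi D u = 1
           \<longrightarrow> (norm u)\<^sup>2 \<le> C / t"
proof -
  interpret A: bounded_linear A by fact
  obtain K where K: "K > 0" "\<And>x. norm (A x) \<le> norm x * K" using A.pos_bounded by blast
  have pos: "\<forall>w\<in>span B. w \<noteq> 0 \<longrightarrow> inner w (A w) > 0"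
  proof (intro ballI impI)
    fix w assume "w \<in> span B" "w \<noteq> 0"
    then show "inner w (A w) > 0" using def qpos[rule_format, of w] by force
  qed
  obtain \<kappa> where \<kappa>: "\<kappa> > 0" "\<forall>w\<in>span B. \<kappa> * (norm w)\<^sup>2 \<le> inner w (A w)"
    using kappa_exists[OF B(1) bl pos] by blast
  define C where "C = (2 / c + 2 * K / d) / \<kappa> + 1 / d"
  have Cpos: "C > 0" unfolding C_def using c K \<kappa> d by (intro add_pos_pos divide_pos_pos) auto
  have main: "(norm u)\<^sup>2 \<le> C / t"
    if t: "0 < t" "t \<le> 1" and u: "u \<in> Hs" and eq: "c * inner u (A u) + t * Psi D u = 1" for t u
  proof -
    obtain y where y: "y \<in> span B" "\<forall>w\<in>span B. inner (u - y) w = 0"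
      using proj_exists[OF B(1)] by blast
    define z where "z = u - y"
    have yN: "y \<in> nullsp Hs D" using y B(2) by simp
    have yH: "y \<in> Hs" using yN unfolding nullsp_def by simp
    have zH: "z \<in> Hs" unfolding z_def using Hs(1) u yH by (simp add: subspace_diff)
    have zO: "z \<in> orth_compl (nullsp Hs D)" unfolding orth_compl_def z_def using y B(2) by simp
    have "rough D y y = 0" using yN yH unfolding nullsp_def by simp
    then have Dy: "D y = 0" unfolding rough_def by simp
    have "D u = D (1 *\<^sub>R y + 1 *\<^sub>R z)" unfolding z_def by simp
    also have "\<dots> = 1 *\<^sub>R D y + 1 *\<^sub>R D z" using Hs(2) yH zH unfolding linear_on_def by blast
    finally have Du: "D u = D z" using Dy by simp
    have PsiZ: "Psi D u = Psi D z" unfolding Psi_def rough_def Du ..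
    have Psi0: "Psi D z \<ge> 0" unfolding Psi_def rough_def by simp
    have cq: "c * inner u (A u) \<ge> 0" using c qpos by simp
    have "t * Psi D z = t * Psi D u" using PsiZ by simp
    then have tPsi: "t * Psi D z \<le> 1" using eq cq by linarith
    have zb: "t * (d * (norm z)\<^sup>2) \<le> 1"
    proof (cases "z = 0")
      case True then show ?thesis by simp
    next
      case False
      then have "Psi D z > d * (norm z)\<^sup>2" using d(2) zO zH by blast
      then have "t * (d * (norm z)\<^sup>2) \<le> t * Psi D z" using t by simp
      then show ?thesis using tPsi by linarith
    qed
    have zb': "t * (norm z)\<^sup>2 \<le> 1 / d"
      using zb d(1) by (simp add: field_simps)
    have qz: "inner z (A z) \<le> K * (norm z)\<^sup>2"
    proof -
      have "inner z (A z) \<le> norm z * norm (A z)" by (rule norm_cauchy_schwarz)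
      also have "\<dots> \<le> norm z * (norm z * K)" using K(2) by (simp add: mult_left_mono)
      finally show ?thesis by (simp add: power2_eq_square mult_ac)
    qed
    have par: "inner (u - z) (A (u - z)) + inner (u + z) (A (u + z)) = 2 * inner u (A u) + 2 * inner z (A z)"
      by (simp add: A.diff A.add inner_diff_left inner_diff_right inner_add_left inner_add_right)
    have qy: "inner y (A y) \<le> 2 * inner u (A u) + 2 * inner z (A z)"
      using par qpos[rule_format, of "u + z"] unfolding z_def by simp
    have "t * Psi D u \<ge> 0" using t Psi0 PsiZ by simp
    then have "c * inner u (A u) \<le> 1" using eq by linarith
    then have qu: "inner u (A u) \<le> 1 / c" using c by (simp add: field_simps mult.commute)
    have "t * (\<kappa> * (norm y)\<^sup>2) \<le> t * inner y (A y)" using \<kappa>(2) y(1) t by simp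
    also have "\<dots> \<le> t * (2 * inner u (A u) + 2 * inner z (A z))" using qy t by simp
    also have "\<dots> = 2 * t * inner u (A u) + 2 * t * inner z (A z)" by (simp add: algebra_simps)
    also have "\<dots> \<le> 2 * (1 / c) + 2 * (K * (1 / d))"
    proof (rule add_mono)
      show "2 * t * inner u (A u) \<le> 2 * (1 / c)"
        using qu t mult_left_le_one_le[of "inner u (A u)" t] qpos by simp
      have "t * inner z (A z) \<le> t * (K * (norm z)\<^sup>2)" using qz t by simp
      also have "\<dots> = K * (t * (norm z)\<^sup>2)" by simp
      also have "\<dots> \<le> K * (1 / d)" using zb' K(1) by (intro mult_left_mono) auto
      finally show "2 * t * inner z (A z) \<le> 2 * (K * (1 / d))" by simp
    qed
    finally have yb: "t * (norm y)\<^sup>2 \<le> (2 / c + 2 * K / d) / \<kappa>"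
      using \<kappa>(1) by (simp add: field_simps)
    have "inner (u - y) y = 0" using y by blast
    then have "orthogonal y z" unfolding orthogonal_def z_def by (simp add: inner_commute)
    then have "(norm u)\<^sup>2 = (norm y)\<^sup>2 + (norm z)\<^sup>2"
      using norm_add_Pythagorean[of y z] unfolding z_def by simp
    then have "t * (norm u)\<^sup>2 \<le> C" using yb zb' unfolding C_def by (simp add: distrib_left)
    then show ?thesis using t by (simp add: field_simps)
  qed
  show ?thesis using Cpos main by blast
qed

lemma eigen_exists:
  fixes T :: "'a::real_inner \<Rightarrow> 'a"
  assumes bl: "bounded_linear T"
    and sym: "\<forall>x y. inner (T x) y = inner x (T y)"
    and pos: "\<forall>x. inner x (T x) \<ge> 0"
    and cpt: "compact K" "T ` cball 0 1 \<subseteq> K"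
    and nz: "T x0 \<noteq> 0"
  shows "\<exists>y. y \<noteq> 0 \<and> (\<exists>l. T y = l *\<^sub>R y)"
proof -
  interpret T: bounded_linear T by fact
  obtain Kb where Kb: "Kb > 0" "\<And>x. norm (T x) \<le> norm x * Kb" using T.pos_bounded by blast
  define q where "q x = inner x (T x)" for x
  define S where "S = q ` cball 0 1"
  have Sne: "S \<noteq> {}" unfolding S_def by auto
  have qle: "q x \<le> Kb" if "x \<in> cball 0 1" for x
  proof -
    have "q x \<le> norm x * norm (T x)" unfolding q_def by (rule norm_cauchy_schwarz)
    also have "\<dots> \<le> 1 * (1 * Kb)"
      using that Kb by (intro mult_mono) (auto intro: order.trans[OF Kb(2)] mult_right_le_one_le)
    finally show ?thesis by simp
  qed
  have bdd: "bdd_above S" unfolding S_def bdd_above_def using qle by blast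
  define M where "M = Sup S"
  have qM: "q x \<le> M" if "x \<in> cball 0 1" for x
    unfolding M_def S_def using that bdd unfolding S_def by (intro cSup_upper) auto
  have q0: "q 0 = 0" unfolding q_def by simp
  have qs: "q (a *\<^sub>R x) = a\<^sup>2 * q x" for a x unfolding q_def by (rule qform_scale[OF bl])
  have Mle: "q x \<le> M * (norm x)\<^sup>2" for x
  proof (cases "x = 0")
    case True then show ?thesis using q0 by simp
  next
    case False
    define e where "e = (1 / norm x) *\<^sub>R x"
    have "e \<in> cball 0 1" unfolding e_def using False by simp
    then have "q e \<le> M" by (rule qM)
    moreover have "q x = (norm x)\<^sup>2 * q e"
    proof -
      have "x = norm x *\<^sub>R e" unfolding e_def using False by simp
      then show ?thesis by (metis qs)
    qed
    ultimately show ?thesis by (metis mult.commute mult_right_mono zero_le_power2)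
  qed
  have Mpos: "M > 0"
  proof (rule ccontr)
    assume "\<not> M > 0"
    then have qz: "q x = 0" for x using Mle[of x] pos unfolding q_def
      by (smt (verit) mult_nonpos_nonneg zero_le_power2)
    define w where "w = T x0"
    have "q (x0 + w) = q x0 + inner x0 (T w) + inner w (T x0) + q w"
      unfolding q_def by (simp add: T.add inner_add_left inner_add_right)
    also have "inner x0 (T w) = inner w w" using sym w_def by (metis inner_commute)
    also have "inner w (T x0) = inner w w" using w_def by simp
    finally have "inner w w = 0" using qz by simp
    then show False using nz w_def by simp
  qed
  have CS: "(norm (T x))\<^sup>2 \<le> M * q x" for x
  proof -
    define t where "t = 1 / M"
    have sx: "inner x (T (T x)) = inner (T x) (T x)" using sym by metis
    have "0 \<le> q (x - t *\<^sub>R T x)" using pos unfolding q_def by simp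
    also have "q (x - t *\<^sub>R T x) = q x - 2 * t * inner (T x) (T x) + t\<^sup>2 * q (T x)"
      unfolding q_def using sx
      by (simp add: T.diff T.scale inner_diff_left inner_diff_right power2_eq_square algebra_simps inner_commute)
    also have "\<dots> \<le> q x - 2 * t * inner (T x) (T x) + t\<^sup>2 * (M * (norm (T x))\<^sup>2)"
      using Mle[of "T x"] by (simp add: mult_left_mono)
    also have "\<dots> = q x - (norm (T x))\<^sup>2 / M"
      unfolding t_def using Mpos by (simp add: power2_norm_eq_inner[symmetric] field_simps power2_eq_square)
    finally show ?thesis using Mpos by (simp add: field_simps)
  qed
  have "\<forall>n. \<exists>x\<in>cball 0 1. M - inverse (real (Suc n)) < q x"
  proof
    fix n
    have "M - inverse (real (Suc n)) < M" by simp
    then obtain s where "s \<in> S" "M - inverse (real (Suc n)) < s"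
      unfolding M_def using less_cSupE[OF _ Sne] by blast
    then show "\<exists>x\<in>cball 0 1. M - inverse (real (Suc n)) < q x" unfolding S_def by auto
  qed
  then obtain xs where xs: "\<And>n. xs n \<in> cball 0 1" "\<And>n. M - inverse (real (Suc n)) < q (xs n)"
    by metis
  have "\<forall>n. T (xs n) \<in> K" using xs(1) cpt(2) by blast
  then obtain l r where lr: "strict_mono r" "((\<lambda>n. T (xs n)) \<circ> r) \<longlonglongrightarrow> l"
    using seq_compactE[OF compact_imp_seq_compact[OF cpt(1)]] by metis
  have est: "(norm (T (xs n) - M *\<^sub>R xs n))\<^sup>2 \<le> M * inverse (real (Suc n))" for n
  proof -
    have nx: "(norm (xs n))\<^sup>2 \<le> 1" using xs(1)[of n] by (simp add: abs_square_le_1)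
    have "(norm (T (xs n) - M *\<^sub>R xs n))\<^sup>2 = (norm (T (xs n)))\<^sup>2 - 2 * M * q (xs n) + M\<^sup>2 * (norm (xs n))\<^sup>2"
      unfolding q_def power2_norm_eq_inner
      by (simp add: inner_diff_left inner_diff_right algebra_simps power2_eq_square inner_commute)
    also have "\<dots> \<le> M * q (xs n) - 2 * M * q (xs n) + M\<^sup>2 * 1"
      using CS[of "xs n"] nx Mpos by (intro add_mono diff_mono mult_left_mono) auto
    also have "\<dots> = M * (M - q (xs n))" by (simp add: algebra_simps power2_eq_square)
    also have "\<dots> \<le> M * inverse (real (Suc n))" using xs(2)[of n] Mpos by (intro mult_left_mono) auto
    finally show ?thesis .
  qed
  have lim0: "(\<lambda>n. T (xs n) - M *\<^sub>R xs n) \<longlonglongrightarrow> 0"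
  proof -
    have "(\<lambda>n. (norm (T (xs n) - M *\<^sub>R xs n))\<^sup>2) \<longlonglongrightarrow> 0"
    proof (rule tendsto_sandwich[of "\<lambda>_. 0" _ _ "\<lambda>n. M * inverse (real (Suc n))"])
      show "\<forall>\<^sub>F n in sequentially. 0 \<le> (norm (T (xs n) - M *\<^sub>R xs n))\<^sup>2" by simp
      show "\<forall>\<^sub>F n in sequentially. (norm (T (xs n) - M *\<^sub>R xs n))\<^sup>2 \<le> M * inverse (real (Suc n))"
        using est by simp
      show "(\<lambda>n. M * inverse (real (Suc n))) \<longlonglongrightarrow> 0"
        using tendsto_mult_right_zero[OF LIMSEQ_inverse_real_of_nat] by simp
    qed simp
    then have "(\<lambda>n. sqrt ((norm (T (xs n) - M *\<^sub>R xs n))\<^sup>2)) \<longlonglongrightarrow> sqrt 0"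
      by (rule tendsto_real_sqrt)
    then have "(\<lambda>n. norm (T (xs n) - M *\<^sub>R xs n)) \<longlonglongrightarrow> 0" by simp
    then show ?thesis by (simp add: tendsto_norm_zero_iff)
  qed
  define z where "z = (1 / M) *\<^sub>R l"
  have l1: "(\<lambda>n. T (xs (r n))) \<longlonglongrightarrow> l" using lr(2) by (simp add: comp_def)
  have l2: "(\<lambda>n. T (xs (r n)) - M *\<^sub>R xs (r n)) \<longlonglongrightarrow> 0"
    using LIMSEQ_subseq_LIMSEQ[OF lim0 lr(1)] by (simp add: comp_def)
  have "(\<lambda>n. (1 / M) *\<^sub>R (T (xs (r n)) - (T (xs (r n)) - M *\<^sub>R xs (r n)))) \<longlonglongrightarrow> (1 / M) *\<^sub>R (l - 0)"
    by (intro tendsto_intros l1 l2)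
  then have lz: "(\<lambda>n. xs (r n)) \<longlonglongrightarrow> z" unfolding z_def using Mpos by simp
  then have "(\<lambda>n. T (xs (r n))) \<longlonglongrightarrow> T z" by (rule T.tendsto)
  then have Tz: "T z = l" using l1 LIMSEQ_unique by blast
  have Tz': "T z = M *\<^sub>R z" using Tz Mpos unfolding z_def by simp
  have "(\<lambda>n. q (xs (r n))) \<longlonglongrightarrow> q z" unfolding q_def
    by (intro tendsto_intros lz T.tendsto)
  moreover have "(\<lambda>n. M - inverse (real (Suc n))) \<longlonglongrightarrow> M - 0"
    by (intro tendsto_intros LIMSEQ_inverse_real_of_nat)
  moreover have "\<forall>n. M - inverse (real (Suc n)) \<le> q (xs (r n))"
  proof
    fix n
    have "n \<le> r n" using seq_suble[OF lr(1)] by simp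
    then have "inverse (real (Suc (r n))) \<le> inverse (real (Suc n))"
      by (simp add: le_imp_inverse_le)
    then show "M - inverse (real (Suc n)) \<le> q (xs (r n))" using xs(2)[of "r n"] by linarith
  qed
  ultimately have "M \<le> q z" using LIMSEQ_le[of "\<lambda>n. M - inverse (real (Suc n))" "M - 0"] by auto
  then have "z \<noteq> 0" using Mpos q0 by auto
  then show ?thesis using Tz' by blast
qed

lemma rate_part:
  fixes x m :: "nat \<Rightarrow> ereal"
  assumes "(\<lambda>n. ereal (r n) * m n) \<longlonglongrightarrow> 0" "\<forall>n. r n \<ge> 0" "\<forall>n. 0 \<le> x n" "\<forall>n. x n \<le> m n"
  shows "(\<lambda>n. ereal (r n) * x n) \<longlonglongrightarrow> 0"
proof (rule tendsto_sandwich[of "\<lambda>_. 0" _ _ "\<lambda>n. ereal (r n) * m n"])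
  show "\<forall>\<^sub>F n in sequentially. 0 \<le> ereal (r n) * x n"
    using assms(2,3) by (simp add: ereal_zero_le_0_iff)
  show "\<forall>\<^sub>F n in sequentially. ereal (r n) * x n \<le> ereal (r n) * m n"
    using assms(2,4) by (simp add: ereal_mult_left_mono)
qed (use assms(1) in auto)

lemma sup_tau_lim:
  fixes F :: "nat \<Rightarrow> 'x \<Rightarrow> real" and S :: "nat \<Rightarrow> 'x set" and U :: "'x set" and \<tau> :: "nat \<Rightarrow> real"
  assumes F0: "\<forall>n u. 0 \<le> F n u"
    and Sne: "\<forall>n. S n \<noteq> {}"
    and C: "C > 0"
    and bnd: "\<forall>n\<ge>N. \<forall>u\<in>S n. \<exists>e\<in>U. \<exists>l. 0 \<le> l \<and> l \<le> C / \<tau> n \<and> F n u = l * F n e"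
    and tau: "\<forall>n. \<tau> n > 0"
    and rate: "(\<lambda>n. ereal (1 / \<tau> n) * (SUP e\<in>U. ereal (F n e))) \<longlonglongrightarrow> 0"
  shows "(\<lambda>n. SUP u\<in>S n. ereal (F n u)) \<longlonglongrightarrow> 0"
proof (rule tendsto_sandwich[of "\<lambda>_. 0" _ _ "\<lambda>n. ereal C * (ereal (1 / \<tau> n) * (SUP e\<in>U. ereal (F n e)))"])
  show "\<forall>\<^sub>F n in sequentially. 0 \<le> (SUP u\<in>S n. ereal (F n u))"
  proof (rule always_eventually, rule allI)
    fix n
    obtain u where "u \<in> S n" using Sne by blast
    then show "0 \<le> (SUP u\<in>S n. ereal (F n u))" using F0 by (auto intro: SUP_upper2)
  qed
  show "\<forall>\<^sub>F n in sequentially. (SUP u\<in>S n. ereal (F n u)) \<le> ereal C * (ereal (1 / \<tau> n) * (SUP e\<in>U. ereal (F n e)))"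
    unfolding eventually_sequentially
  proof (intro exI[of _ N] allI impI)
    fix n assume n: "N \<le> n"
    show "(SUP u\<in>S n. ereal (F n u)) \<le> ereal C * (ereal (1 / \<tau> n) * (SUP e\<in>U. ereal (F n e)))"
    proof (rule SUP_least)
      fix u assume u: "u \<in> S n"
      then obtain e l where el: "e \<in> U" "0 \<le> l" "l \<le> C / \<tau> n" "F n u = l * F n e"
        using bnd n by blast
      have "ereal (F n u) = ereal l * ereal (F n e)" using el by simp
      also have "\<dots> \<le> ereal (C / \<tau> n) * ereal (F n e)"
        using el F0 by (intro ereal_mult_right_mono) auto
      also have "\<dots> \<le> ereal (C / \<tau> n) * (SUP e\<in>U. ereal (F n e))"
        using el C tau by (intro ereal_mult_left_mono SUP_upper) (auto intro: less_imp_le)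
      also have "\<dots> = ereal C * (ereal (1 / \<tau> n) * (SUP e\<in>U. ereal (F n e)))"
        by (simp add: mult.assoc[symmetric])
      finally show "ereal (F n u) \<le> ereal C * (ereal (1 / \<tau> n) * (SUP e\<in>U. ereal (F n e)))" .
    qed
  qed
  show "(\<lambda>n. ereal C * (ereal (1 / \<tau> n) * (SUP e\<in>U. ereal (F n e)))) \<longlonglongrightarrow> 0"
    using tendsto_cmult_ereal[OF _ rate, of "ereal C"] by simp
qed simp

lemma sphere_ne:
  fixes A D :: "'a::real_inner \<Rightarrow> 'a" and P :: "'a \<Rightarrow> real"
  assumes bl: "bounded_linear A" and c: "c > 0" and hP: "\<forall>u. (P u)\<^sup>2 = c * inner u (A u)"
    and Hs: "subspace Hs" "linear_on Hs D" and h0: "h0 \<in> Hs" "h0 \<noteq> 0"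
    and nn: "h0 \<in> nullsp Hs D \<Longrightarrow> P h0 \<noteq> 0" and t: "t > 0"
  shows "\<exists>u\<in>Hs. (P u)\<^sup>2 + t * Psi D u = 1"
proof -
  define V where "V = (P h0)\<^sup>2 + t * Psi D h0"
  have Psi0: "Psi D h0 \<ge> 0" unfolding Psi_def rough_def by simp
  have Vpos: "V > 0"
  proof (rule ccontr)
    assume "\<not> V > 0"
    moreover have "(P h0)\<^sup>2 \<ge> 0" by simp
    moreover have "t * Psi D h0 \<ge> 0" using t Psi0 by simp
    ultimately have "(P h0)\<^sup>2 = 0" "t * Psi D h0 = 0" unfolding V_def by linarith+
    then have "P h0 = 0" "Psi D h0 = 0" using t by auto
    then have "D h0 = 0" unfolding Psi_def rough_def by simp
    then have "h0 \<in> nullsp Hs D" unfolding nullsp_def rough_def using h0 by simp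
    then show False using nn \<open>P h0 = 0\<close> by simp
  qed
  define a where "a = 1 / sqrt V"
  have aH: "a *\<^sub>R h0 \<in> Hs" using Hs(1) h0 by (simp add: subspace_scale)
  have "D (a *\<^sub>R h0 + 0 *\<^sub>R h0) = a *\<^sub>R D h0 + 0 *\<^sub>R D h0"
    using Hs(2)[unfolded linear_on_def, rule_format, OF h0(1) h0(1), of a 0] .
  then have Dah: "D (a *\<^sub>R h0) = a *\<^sub>R D h0" by simp
  have Psia: "Psi D (a *\<^sub>R h0) = a\<^sup>2 * Psi D h0"
    unfolding Psi_def rough_def Dah by (simp add: power2_eq_square)
  have Pa: "(P (a *\<^sub>R h0))\<^sup>2 = a\<^sup>2 * (P h0)\<^sup>2"
    using hP qform_scale[OF bl, of a h0] by simp
  have "(P (a *\<^sub>R h0))\<^sup>2 + t * Psi D (a *\<^sub>R h0) = a\<^sup>2 * V"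
    unfolding Pa Psia V_def by (simp add: algebra_simps)
  also have "\<dots> = 1" unfolding a_def using Vpos by (simp add: power_divide)
  finally show ?thesis using aH by blast
qed

lemma bl_blk:
  fixes G :: "'a::real_normed_vector \<times> 'a \<Rightarrow> 'a \<times> 'a"
  assumes "bounded_linear G"
  shows "bounded_linear (blk11 G)" "bounded_linear (blk12 G)" "bounded_linear (blk22 G)"
proof -
  have p1: "bounded_linear (\<lambda>u::'a. (u, 0::'a))"
    by (intro bounded_linear_Pair bounded_linear_ident bounded_linear_zero)
  have p2: "bounded_linear (\<lambda>u::'a. (0::'a, u))"
    by (intro bounded_linear_Pair bounded_linear_ident bounded_linear_zero)
  have "bounded_linear (\<lambda>u. fst (G (u, 0)))"
    using bounded_linear_compose[OF bounded_linear_fst bounded_linear_compose[OF assms p1]] by simp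
  then show "bounded_linear (blk11 G)" unfolding blk11_def[abs_def] .
  have "bounded_linear (\<lambda>u. fst (G (0, u)))"
    using bounded_linear_compose[OF bounded_linear_fst bounded_linear_compose[OF assms p2]] by simp
  then show "bounded_linear (blk12 G)" unfolding blk12_def[abs_def] .
  have "bounded_linear (\<lambda>u. snd (G (0, u)))"
    using bounded_linear_compose[OF bounded_linear_snd bounded_linear_compose[OF assms p2]] by simp
  then show "bounded_linear (blk22 G)" unfolding blk22_def[abs_def] .
qed

lemma blk11_props:
  fixes G :: "'a::real_inner \<times> 'a \<Rightarrow> 'a \<times> 'a"
  assumes "self_adjoint G" "compact_op G"
  shows "\<forall>x y. inner (blk11 G x) y = inner x (blk11 G y)"
    "compact (fst ` closure (G ` cball 0 1))" "blk11 G ` cball 0 1 \<subseteq> fst ` closure (G ` cball 0 1)"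
proof -
  show "\<forall>x y. inner (blk11 G x) y = inner x (blk11 G y)"
  proof (intro allI)
    fix x y :: 'a
    have "inner (G (x, 0)) (y, 0) = inner (x, 0) (G (y, 0))"
      using assms(1) unfolding self_adjoint_def by blast
    then show "inner (blk11 G x) y = inner x (blk11 G y)"
      unfolding blk11_def by (simp add: inner_prod_def)
  qed
  have "compact (closure (G ` cball 0 1))" using assms(2) unfolding compact_op_def by simp
  then show "compact (fst ` closure (G ` cball 0 1))"
    by (intro compact_continuous_image continuous_intros)
  show "blk11 G ` cball 0 1 \<subseteq> fst ` closure (G ` cball 0 1)"
  proof
    fix w assume "w \<in> blk11 G ` cball 0 1"
    then obtain u where u: "norm u \<le> 1" "w = fst (G (u, 0))" unfolding blk11_def by auto
    have "(u, 0) \<in> cball (0::'a \<times> 'a) 1" using u(1) by (simp add: norm_Pair)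
    then have "G (u, 0) \<in> G ` cball 0 1" by (rule imageI)
    then have "G (u, 0) \<in> closure (G ` cball 0 1)" using closure_subset by (rule rev_subsetD)
    then show "w \<in> fst ` closure (G ` cball 0 1)" using u(2) by (rule rev_image_eqI)
  qed
qed

lemma aux_half: "(a::real) \<le> K \<Longrightarrow> b \<le> K \<Longrightarrow> p \<le> (a + b) / 2 \<Longrightarrow> p \<le> K"
  by (simp add: field_simps)

theorem lemma1:
  fixes M :: "'w measure"
    and X Y :: "nat \<Rightarrow> 'w \<Rightarrow> 'h::{real_inner, complete_space}"
    and X0 Y0 :: "'w \<Rightarrow> 'h"
    and \<gamma>R :: "(real \<times> real) measure \<Rightarrow> real"
    and \<sigma>R :: "real measure \<Rightarrow> real"
    and Hs :: "'h set" and D :: "'h \<Rightarrow> 'h"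
    and \<tau> :: "nat \<Rightarrow> real"
  assumes sep: "separable_space TYPE('h)"
    and P: "prob_space M"
    and func: "coassoc_functional \<gamma>R" "scale_functional \<sigma>R" "cs_bound \<gamma>R \<sigma>R"
    and smooth: "subspace Hs" "linear_on Hs D"
    and meas0: "(\<lambda>\<omega>. (X0 \<omega>, Y0 \<omega>)) \<in> borel_measurable M"
    and meas: "\<And>i. (\<lambda>\<omega>. (X i \<omega>, Y i \<omega>)) \<in> borel_measurable M"
    and indep: "prob_space.indep_vars M (\<lambda>_. borel) (\<lambda>i \<omega>. (X i \<omega>, Y i \<omega>)) UNIV"
    and ident: "\<And>i. distr M borel (\<lambda>\<omega>. (X i \<omega>, Y i \<omega>)) = distr M borel (\<lambda>\<omega>. (X0 \<omega>, Y0 \<omega>))"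
    and C1: "\<exists>c>0. \<exists>G :: 'h \<times> 'h \<Rightarrow> 'h \<times> 'h.
               self_adjoint G \<and> positive_op G \<and> compact_op G \<and>
               (\<forall>u. (pop_sig \<sigma>R M X0 u)\<^sup>2 = c * inner u (blk11 G u)) \<and>
               (\<forall>v. (pop_sig \<sigma>R M Y0 v)\<^sup>2 = c * inner v (blk22 G v)) \<and>
               (\<forall>u v. pop_gam \<gamma>R M X0 Y0 u v = c * inner u (blk12 G v)) \<and>
               (\<forall>u. eigenfunction (blk11 G) u \<longrightarrow> u \<in> Hs) \<and>
               (\<forall>v. eigenfunction (blk22 G) v \<longrightarrow> v \<in> Hs)"
    and C3a: "\<forall>u\<in>nullsp Hs D. u \<noteq> 0 \<longrightarrow> pop_sig \<sigma>R M X0 u \<noteq> 0 \<and> pop_sig \<sigma>R M Y0 u \<noteq> 0"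
    and C3b: "\<exists>B. finite B \<and> nullsp Hs D = span B"
             "\<exists>d>0. \<forall>u\<in>orth_compl (nullsp Hs D) \<inter> Hs. u \<noteq> 0 \<longrightarrow> Psi D u > d * (norm u)\<^sup>2"
    and tau_pos: "\<And>n. \<tau> n > 0"
    and tau_lim: "\<tau> \<longlonglongrightarrow> 0"
    and rate: "AE \<omega> in M. (\<lambda>n. ereal (1 / \<tau> n) *
                 max (SUP u\<in>{u. norm u = 1}. ereal \<bar>(emp_sig \<sigma>R X n \<omega> u)\<^sup>2 - (pop_sig \<sigma>R M X0 u)\<^sup>2\<bar>)
                 (max (SUP v\<in>{v. norm v = 1}. ereal \<bar>(emp_sig \<sigma>R Y n \<omega> v)\<^sup>2 - (pop_sig \<sigma>R M Y0 v)\<^sup>2\<bar>)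
                      (SUP (u,v)\<in>{(u,v). norm u = 1 \<and> norm v = 1}.
                          ereal \<bar>emp_gam \<gamma>R X Y n \<omega> u v - pop_gam \<gamma>R M X0 Y0 u v\<bar>)))
               \<longlonglongrightarrow> 0"
  shows "AE \<omega> in M.
     (\<lambda>n. SUP u\<in>{u\<in>Hs. (pop_sig \<sigma>R M X0 u)\<^sup>2 + \<tau> n * Psi D u = 1}.
             ereal \<bar>(emp_sig \<sigma>R X n \<omega> u)\<^sup>2 - (pop_sig \<sigma>R M X0 u)\<^sup>2\<bar>) \<longlonglongrightarrow> 0
   \<and> (\<lambda>n. SUP v\<in>{v\<in>Hs. (pop_sig \<sigma>R M Y0 v)\<^sup>2 + \<tau> n * Psi D v = 1}.
             ereal \<bar>(emp_sig \<sigma>R Y n \<omega> v)\<^sup>2 - (pop_sig \<sigma>R M Y0 v)\<^sup>2\<bar>) \<longlonglongrightarrow> 0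
   \<and> (\<lambda>n. SUP (u,v)\<in>{(u,v). u \<in> Hs \<and> v \<in> Hs \<and>
                 (pop_sig \<sigma>R M X0 u)\<^sup>2 + \<tau> n * Psi D u = 1 \<and>
                 (pop_sig \<sigma>R M Y0 v)\<^sup>2 + \<tau> n * Psi D v = 1}.
             ereal \<bar>emp_gam \<gamma>R X Y n \<omega> u v - pop_gam \<gamma>R M X0 Y0 u v\<bar>) \<longlonglongrightarrow> 0"
proof -
  obtain c G where c: "c > 0" and G: "self_adjoint G" "positive_op G" "compact_op G"
    and hX: "\<forall>u. (pop_sig \<sigma>R M X0 u)\<^sup>2 = c * inner u (blk11 G u)"
    and hY: "\<forall>v. (pop_sig \<sigma>R M Y0 v)\<^sup>2 = c * inner v (blk22 G v)"
    and hXY: "\<forall>u v. pop_gam \<gamma>R M X0 Y0 u v = c * inner u (blk12 G v)"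
    and eX: "\<forall>u. eigenfunction (blk11 G) u \<longrightarrow> u \<in> Hs"
    using C1 by (elim exE conjE) blast
  obtain B where B: "finite B" "nullsp Hs D = span B" using C3b(1) by blast
  obtain d where d: "d > 0" "\<forall>u\<in>orth_compl (nullsp Hs D) \<inter> Hs. u \<noteq> 0 \<longrightarrow> Psi D u > d * (norm u)\<^sup>2"
    using C3b(2) by blast
  have blG: "bounded_linear G" using G(3) unfolding compact_op_def by simp
  note bl = bl_blk[OF blG]
  have q1: "\<forall>w. 0 \<le> inner w (blk11 G w)"
  proof
    fix w
    have "0 \<le> c * inner w (blk11 G w)" using hX by (metis zero_le_power2)
    then show "0 \<le> inner w (blk11 G w)" using c by (simp add: zero_le_mult_iff)
  qed
  have q2: "\<forall>w. 0 \<le> inner w (blk22 G w)"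
  proof
    fix w
    have "0 \<le> c * inner w (blk22 G w)" using hY by (metis zero_le_power2)
    then show "0 \<le> inner w (blk22 G w)" using c by (simp add: zero_le_mult_iff)
  qed
  have def1: "\<forall>w\<in>span B. w \<noteq> 0 \<longrightarrow> inner w (blk11 G w) \<noteq> 0"
  proof (intro ballI impI)
    fix w assume "w \<in> span B" "w \<noteq> 0"
    then have "pop_sig \<sigma>R M X0 w \<noteq> 0" using C3a B(2) by auto
    then have "(pop_sig \<sigma>R M X0 w)\<^sup>2 \<noteq> 0" by simp
    then show "inner w (blk11 G w) \<noteq> 0" using hX by auto
  qed
  have def2: "\<forall>w\<in>span B. w \<noteq> 0 \<longrightarrow> inner w (blk22 G w) \<noteq> 0"
  proof (intro ballI impI)
    fix w assume "w \<in> span B" "w \<noteq> 0"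
    then have "pop_sig \<sigma>R M Y0 w \<noteq> 0" using C3a B(2) by auto
    then have "(pop_sig \<sigma>R M Y0 w)\<^sup>2 \<noteq> 0" by simp
    then show "inner w (blk22 G w) \<noteq> 0" using hY by auto
  qed
  obtain CX where CX: "CX > 0" "\<forall>t u. 0 < t \<longrightarrow> t \<le> 1 \<longrightarrow> u \<in> Hs \<longrightarrow> c * inner u (blk11 G u) + t * Psi D u = 1
           \<longrightarrow> (norm u)\<^sup>2 \<le> CX / t"
    using norm_bound[OF bl(1) q1 c smooth(1) smooth(2) B def1 d] by blast
  obtain CY where CY: "CY > 0" "\<forall>t u. 0 < t \<longrightarrow> t \<le> 1 \<longrightarrow> u \<in> Hs \<longrightarrow> c * inner u (blk22 G u) + t * Psi D u = 1
           \<longrightarrow> (norm u)\<^sup>2 \<le> CY / t"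
    using norm_bound[OF bl(3) q2 c smooth(1) smooth(2) B def2 d] by blast
  have bX: "(norm u)\<^sup>2 \<le> (CX + CY) / \<tau> n"
    if "\<tau> n \<le> 1" "u \<in> Hs" "(pop_sig \<sigma>R M X0 u)\<^sup>2 + \<tau> n * Psi D u = 1" for n u
  proof -
    have "(norm u)\<^sup>2 \<le> CX / \<tau> n" using CX(2) tau_pos[of n] that hX by auto
    also have "\<dots> \<le> (CX + CY) / \<tau> n" using CY(1) tau_pos[of n] by (simp add: divide_right_mono)
    finally show ?thesis .
  qed
  have bY: "(norm u)\<^sup>2 \<le> (CX + CY) / \<tau> n"
    if "\<tau> n \<le> 1" "u \<in> Hs" "(pop_sig \<sigma>R M Y0 u)\<^sup>2 + \<tau> n * Psi D u = 1" for n u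
  proof -
    have "(norm u)\<^sup>2 \<le> CY / \<tau> n" using CY(2) tau_pos[of n] that hY by auto
    also have "\<dots> \<le> (CX + CY) / \<tau> n" using CX(1) tau_pos[of n] by (simp add: divide_right_mono)
    finally show ?thesis .
  qed
  have "\<forall>\<^sub>F n in sequentially. \<tau> n < 1" using order_tendstoD(2)[OF tau_lim, of 1] by simp
  then obtain N0 where N0: "\<forall>n\<ge>N0. \<tau> n < 1" unfolding eventually_sequentially by blast
  define N where "N = max N0 1"
  have Nprop: "\<tau> n \<le> 1" "n > 0" if "n \<ge> N" for n using N0 that unfolding N_def by auto
  have popX_scale: "(pop_sig \<sigma>R M X0 (a *\<^sub>R e))\<^sup>2 = a\<^sup>2 * (pop_sig \<sigma>R M X0 e)\<^sup>2" for a e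
    using hX qform_scale[OF bl(1), of a e] by simp
  have popY_scale: "(pop_sig \<sigma>R M Y0 (a *\<^sub>R e))\<^sup>2 = a\<^sup>2 * (pop_sig \<sigma>R M Y0 e)\<^sup>2" for a e
    using hY qform_scale[OF bl(3), of a e] by simp
  have popXY_scale: "pop_gam \<gamma>R M X0 Y0 (a *\<^sub>R e) (b *\<^sub>R f) = a * b * pop_gam \<gamma>R M X0 Y0 e f" for a b e f
  proof -
    interpret A12: bounded_linear "blk12 G" by (rule bl(2))
    show ?thesis using hXY by (simp add: A12.scale)
  qed
  show ?thesis
    using rate
  proof (rule eventually_mono)
    fix \<omega>
    define FX where "FX n u = \<bar>(emp_sig \<sigma>R X n \<omega> u)\<^sup>2 - (pop_sig \<sigma>R M X0 u)\<^sup>2\<bar>" for n u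
    define FY where "FY n u = \<bar>(emp_sig \<sigma>R Y n \<omega> u)\<^sup>2 - (pop_sig \<sigma>R M Y0 u)\<^sup>2\<bar>" for n u
    define FXY where "FXY n p = \<bar>emp_gam \<gamma>R X Y n \<omega> (fst p) (snd p) - pop_gam \<gamma>R M X0 Y0 (fst p) (snd p)\<bar>" for n p
    define U1 where "U1 = {u::'h. norm u = 1}"
    define U2 where "U2 = {(u::'h, v::'h). norm u = 1 \<and> norm v = 1}"
    define aX where "aX n = (SUP u\<in>U1. ereal (FX n u))" for n
    define aY where "aY n = (SUP u\<in>U1. ereal (FY n u))" for n
    define aXY where "aXY n = (SUP p\<in>U2. ereal (FXY n p))" for n
    assume R0: "(\<lambda>n. ereal (1 / \<tau> n) *
                 max (SUP u\<in>{u. norm u = 1}. ereal \<bar>(emp_sig \<sigma>R X n \<omega> u)\<^sup>2 - (pop_sig \<sigma>R M X0 u)\<^sup>2\<bar>)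
                 (max (SUP v\<in>{v. norm v = 1}. ereal \<bar>(emp_sig \<sigma>R Y n \<omega> v)\<^sup>2 - (pop_sig \<sigma>R M Y0 v)\<^sup>2\<bar>)
                      (SUP (u,v)\<in>{(u,v). norm u = 1 \<and> norm v = 1}.
                          ereal \<bar>emp_gam \<gamma>R X Y n \<omega> u v - pop_gam \<gamma>R M X0 Y0 u v\<bar>)))
               \<longlonglongrightarrow> 0"
    have R: "(\<lambda>n. ereal (1 / \<tau> n) * max (aX n) (max (aY n) (aXY n))) \<longlonglongrightarrow> 0"
      using R0 unfolding aX_def aY_def aXY_def FX_def FY_def FXY_def U1_def U2_def
      by (simp add: split_def)
    obtain x :: 'h where x: "norm x = 1"
    proof (cases "\<exists>x::'h. norm x = 1")
      case True then show ?thesis using that by blast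
    next
      case False
      then have "U1 = {}" "U2 = {}" unfolding U1_def U2_def by auto
      then have "\<forall>n. ereal (1 / \<tau> n) * max (aX n) (max (aY n) (aXY n)) = - \<infinity>"
        unfolding aX_def aY_def aXY_def using tau_pos by (simp add: bot_ereal_def less_imp_neq[symmetric])
      then have "(\<lambda>n. ereal (1 / \<tau> n) * max (aX n) (max (aY n) (aXY n))) = (\<lambda>n. - \<infinity>)"
        by (intro ext) (rule spec)
      then have "(\<lambda>n. - \<infinity> :: ereal) \<longlonglongrightarrow> 0" using R by simp
      then show ?thesis by (simp add: LIMSEQ_const_iff)
    qed
    have xU1: "x \<in> U1" unfolding U1_def using x by simp
    have ndec: "\<exists>e\<in>U1. u = norm u *\<^sub>R e" for u
    proof (cases "u = 0")
      case True then show ?thesis using xU1 by auto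
    next
      case False then show ?thesis
        by (intro bexI[of _ "(1 / norm u) *\<^sub>R u"]) (auto simp: U1_def)
    qed
    obtain h0 where h0: "h0 \<in> Hs" "h0 \<noteq> 0"
    proof (cases "\<exists>x0. blk11 G x0 \<noteq> 0")
      case True
      then obtain x0 where "blk11 G x0 \<noteq> 0" by blast
      from eigen_exists[OF bl(1) blk11_props(1)[OF G(1) G(3)] q1 blk11_props(2,3)[OF G(1) G(3)] this]
      obtain y l where "y \<noteq> 0" "blk11 G y = l *\<^sub>R y" by blast
      then have "eigenfunction (blk11 G) y" unfolding eigenfunction_def by blast
      then show ?thesis using that eX \<open>y \<noteq> 0\<close> by blast
    next
      case False
      then have "blk11 G x = 0 *\<^sub>R x" by simp
      then have "eigenfunction (blk11 G) x" unfolding eigenfunction_def using x by auto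
      then show ?thesis using that eX x by fastforce
    qed
    define SX where "SX n = {u\<in>Hs. (pop_sig \<sigma>R M X0 u)\<^sup>2 + \<tau> n * Psi D u = 1}" for n
    define SY where "SY n = {v\<in>Hs. (pop_sig \<sigma>R M Y0 v)\<^sup>2 + \<tau> n * Psi D v = 1}" for n
    define SXY where "SXY n = {(u,v). u \<in> Hs \<and> v \<in> Hs \<and>
                 (pop_sig \<sigma>R M X0 u)\<^sup>2 + \<tau> n * Psi D u = 1 \<and>
                 (pop_sig \<sigma>R M Y0 v)\<^sup>2 + \<tau> n * Psi D v = 1}" for n
    have SXne: "\<forall>n. SX n \<noteq> {}"
    proof
      fix n
      have "h0 \<in> nullsp Hs D \<Longrightarrow> pop_sig \<sigma>R M X0 h0 \<noteq> 0" using C3a h0 by blast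
      from sphere_ne[OF bl(1) c hX smooth(1,2) h0 this tau_pos[of n]]
      show "SX n \<noteq> {}" unfolding SX_def by blast
    qed
    have SYne: "\<forall>n. SY n \<noteq> {}"
    proof
      fix n
      have "h0 \<in> nullsp Hs D \<Longrightarrow> pop_sig \<sigma>R M Y0 h0 \<noteq> 0" using C3a h0 by blast
      from sphere_ne[OF bl(3) c hY smooth(1,2) h0 this tau_pos[of n]]
      show "SY n \<noteq> {}" unfolding SY_def by blast
    qed
    have SXYne: "\<forall>n. SXY n \<noteq> {}"
    proof
      fix n
      obtain u where "u \<in> SX n" using SXne by blast
      moreover obtain v where "v \<in> SY n" using SYne by blast
      ultimately have "(u, v) \<in> SXY n" unfolding SX_def SY_def SXY_def by simp
      then show "SXY n \<noteq> {}" by blast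
    qed
    have aX0: "0 \<le> aX n" for n unfolding aX_def FX_def using xU1 by (auto intro: SUP_upper2)
    have aY0: "0 \<le> aY n" for n unfolding aY_def FY_def using xU1 by (auto intro: SUP_upper2)
    have xxU2: "(x, x) \<in> U2" unfolding U2_def using x by simp
    have aXY0: "0 \<le> aXY n" for n unfolding aXY_def FXY_def using xxU2 by (auto intro: SUP_upper2)
    have tp: "\<forall>n. 1 / \<tau> n \<ge> 0" using tau_pos by (simp add: less_imp_le)
    have rX: "(\<lambda>n. ereal (1 / \<tau> n) * aX n) \<longlonglongrightarrow> 0"
      by (rule rate_part[OF R tp]) (auto simp: aX0 le_max_iff_disj)
    have rY: "(\<lambda>n. ereal (1 / \<tau> n) * aY n) \<longlonglongrightarrow> 0"
      by (rule rate_part[OF R tp]) (auto simp: aY0 aX0 aXY0 le_max_iff_disj)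
    have rXY: "(\<lambda>n. ereal (1 / \<tau> n) * aXY n) \<longlonglongrightarrow> 0"
      by (rule rate_part[OF R tp]) (auto simp: aY0 aX0 aXY0 le_max_iff_disj)
    have CXY: "CX + CY > 0" using CX CY by simp
    have limX: "(\<lambda>n. SUP u\<in>SX n. ereal (FX n u)) \<longlonglongrightarrow> 0"
    proof (rule sup_tau_lim[where U = U1 and N = N])
      show "\<forall>n u. 0 \<le> FX n u" unfolding FX_def by simp
      show "\<forall>n\<ge>N. \<forall>u\<in>SX n. \<exists>e\<in>U1. \<exists>l. 0 \<le> l \<and> l \<le> (CX + CY) / \<tau> n \<and> FX n u = l * FX n e"
      proof (intro allI impI ballI)
        fix n u assume n: "N \<le> n" and u: "u \<in> SX n"
        obtain e where e: "e \<in> U1" "u = norm u *\<^sub>R e" using ndec by blast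
        have "FX n u = FX n (norm u *\<^sub>R e)" using e(2) by simp
        also have "\<dots> = (norm u)\<^sup>2 * FX n e"
          unfolding FX_def emp_sig_scale[OF func(2) Nprop(2)[OF n]] popX_scale
          by (simp add: power_mult_distrib abs_mult right_diff_distrib[symmetric])
        finally have "FX n u = (norm u)\<^sup>2 * FX n e" .
        moreover have "(norm u)\<^sup>2 \<le> (CX + CY) / \<tau> n"
          using bX[OF Nprop(1)[OF n]] u unfolding SX_def by blast
        ultimately show "\<exists>e\<in>U1. \<exists>l. 0 \<le> l \<and> l \<le> (CX + CY) / \<tau> n \<and> FX n u = l * FX n e"
          using e(1) by (intro bexI[of _ e] exI[of _ "(norm u)\<^sup>2"]) auto
      qed
      show "(\<lambda>n. ereal (1 / \<tau> n) * (SUP e\<in>U1. ereal (FX n e))) \<longlonglongrightarrow> 0"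
        using rX unfolding aX_def .
    qed (use SXne CXY tau_pos in auto)
    have limY: "(\<lambda>n. SUP u\<in>SY n. ereal (FY n u)) \<longlonglongrightarrow> 0"
    proof (rule sup_tau_lim[where U = U1 and N = N])
      show "\<forall>n u. 0 \<le> FY n u" unfolding FY_def by simp
      show "\<forall>n\<ge>N. \<forall>u\<in>SY n. \<exists>e\<in>U1. \<exists>l. 0 \<le> l \<and> l \<le> (CX + CY) / \<tau> n \<and> FY n u = l * FY n e"
      proof (intro allI impI ballI)
        fix n u assume n: "N \<le> n" and u: "u \<in> SY n"
        obtain e where e: "e \<in> U1" "u = norm u *\<^sub>R e" using ndec by blast
        have "FY n u = FY n (norm u *\<^sub>R e)" using e(2) by simp
        also have "\<dots> = (norm u)\<^sup>2 * FY n e"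
          unfolding FY_def emp_sig_scale[OF func(2) Nprop(2)[OF n]] popY_scale
          by (simp add: power_mult_distrib abs_mult right_diff_distrib[symmetric])
        finally have "FY n u = (norm u)\<^sup>2 * FY n e" .
        moreover have "(norm u)\<^sup>2 \<le> (CX + CY) / \<tau> n"
          using bY[OF Nprop(1)[OF n]] u unfolding SY_def by blast
        ultimately show "\<exists>e\<in>U1. \<exists>l. 0 \<le> l \<and> l \<le> (CX + CY) / \<tau> n \<and> FY n u = l * FY n e"
          using e(1) by (intro bexI[of _ e] exI[of _ "(norm u)\<^sup>2"]) auto
      qed
      show "(\<lambda>n. ereal (1 / \<tau> n) * (SUP e\<in>U1. ereal (FY n e))) \<longlonglongrightarrow> 0"
        using rY unfolding aY_def .
    qed (use SYne CXY tau_pos in auto)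
    have limXY: "(\<lambda>n. SUP p\<in>SXY n. ereal (FXY n p)) \<longlonglongrightarrow> 0"
    proof (rule sup_tau_lim[where U = U2 and N = N])
      show "\<forall>n u. 0 \<le> FXY n u" unfolding FXY_def by simp
      show "\<forall>n\<ge>N. \<forall>p\<in>SXY n. \<exists>e\<in>U2. \<exists>l. 0 \<le> l \<and> l \<le> (CX + CY) / \<tau> n \<and> FXY n p = l * FXY n e"
      proof (intro allI impI ballI)
        fix n p assume n: "N \<le> n" and p: "p \<in> SXY n"
        obtain u v where uv: "p = (u, v)" by fastforce
        obtain e where e: "e \<in> U1" "u = norm u *\<^sub>R e" using ndec by blast
        obtain f where f: "f \<in> U1" "v = norm v *\<^sub>R f" using ndec by blast
        have efU: "(e, f) \<in> U2" using e(1) f(1) unfolding U1_def U2_def by simp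
        have "FXY n p = FXY n (norm u *\<^sub>R e, norm v *\<^sub>R f)" using e(2) f(2) uv by simp
        also have "\<dots> = (norm u * norm v) * FXY n (e, f)"
          unfolding FXY_def fst_conv snd_conv emp_gam_scale[OF func(1) Nprop(2)[OF n]] popXY_scale
          by (simp add: abs_mult right_diff_distrib[symmetric])
        finally have eq: "FXY n p = (norm u * norm v) * FXY n (e, f)" .
        have "(norm u)\<^sup>2 \<le> (CX + CY) / \<tau> n"
          using bX[OF Nprop(1)[OF n]] p uv unfolding SXY_def by blast
        moreover have "(norm v)\<^sup>2 \<le> (CX + CY) / \<tau> n"
          using bY[OF Nprop(1)[OF n]] p uv unfolding SXY_def by blast
        moreover have "norm u * norm v \<le> ((norm u)\<^sup>2 + (norm v)\<^sup>2) / 2"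
          using sum_squares_bound[of "norm u" "norm v"] by (simp add: power2_eq_square)
        ultimately have "norm u * norm v \<le> (CX + CY) / \<tau> n"
          by (rule aux_half)
        then show "\<exists>e\<in>U2. \<exists>l. 0 \<le> l \<and> l \<le> (CX + CY) / \<tau> n \<and> FXY n p = l * FXY n e"
          using efU eq by (intro bexI[of _ "(e, f)"] exI[of _ "norm u * norm v"]) auto
      qed
      show "(\<lambda>n. ereal (1 / \<tau> n) * (SUP e\<in>U2. ereal (FXY n e))) \<longlonglongrightarrow> 0"
        using rXY unfolding aXY_def .
    qed (use SXYne CXY tau_pos in auto)
    show "(\<lambda>n. SUP u\<in>{u\<in>Hs. (pop_sig \<sigma>R M X0 u)\<^sup>2 + \<tau> n * Psi D u = 1}.
             ereal \<bar>(emp_sig \<sigma>R X n \<omega> u)\<^sup>2 - (pop_sig \<sigma>R M X0 u)\<^sup>2\<bar>) \<longlonglongrightarrow> 0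
   \<and> (\<lambda>n. SUP v\<in>{v\<in>Hs. (pop_sig \<sigma>R M Y0 v)\<^sup>2 + \<tau> n * Psi D v = 1}.
             ereal \<bar>(emp_sig \<sigma>R Y n \<omega> v)\<^sup>2 - (pop_sig \<sigma>R M Y0 v)\<^sup>2\<bar>) \<longlonglongrightarrow> 0
   \<and> (\<lambda>n. SUP (u,v)\<in>{(u,v). u \<in> Hs \<and> v \<in> Hs \<and>
                 (pop_sig \<sigma>R M X0 u)\<^sup>2 + \<tau> n * Psi D u = 1 \<and>
                 (pop_sig \<sigma>R M Y0 v)\<^sup>2 + \<tau> n * Psi D v = 1}.
             ereal \<bar>emp_gam \<gamma>R X Y n \<omega> u v - pop_gam \<gamma>R M X0 Y0 u v\<bar>) \<longlonglongrightarrow> 0"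
      using limX limY limXY unfolding SX_def SY_def SXY_def FX_def FY_def FXY_def
      by (simp add: split_def)
  qed
qed


end
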